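(* Let $(Q,\rightarrow)$ be a finite transition system, $\mathscr{R}$ a preorder on $Q$ and $\mathscr{P}\subseteq\mathscr{R}$ an equivalence relation with a representative $E.\mathrm{rep}\in E$ fixed for each block $E$ of $\mathscr{P}$. Let $E$ be a block of $\mathscr{P}$ and $B$ a block of $\mathscr{R}$ such that $E\rightarrow B$ and $\mathrm{RelCount}_{(\mathscr{P},\mathscr{R})}(E,B)=0$ (a splitter transition of type 1). Let $P'=\mathrm{Split}(P_{\mathscr{P}},\rightarrow^{-1}(\mathscr{R}(B)))$. Then the equivalence relation $\mathscr{P}_{P'}$ is strictly included in $\mathscr{P}$ and contains every $\mathscr{R}$-block-stable equivalence relation included in $\mathscr{P}$.
   Context: A preorder is a reflexive transitive relation; its blocks are $[q]_{\mathscr{R}}=\{q'\mid q\,\mathscr{R}\,q'\wedge q'\,\mathscr{R}\,q\}$. $\mathscr{R}(X)=\{q'\mid\exists q\in X.\ q\,\mathscr{R}\,q'\}$, $\rightarrow^{-1}(Y)=\{q\mid\exists y\in Y.\ q\rightarrow y\}$. For sets $X,Y$ write $X\rightarrow Y$ if some $x\in X,y\in Y$ have $x\rightarrow y$, and $X\,\mathscr{R}\,Y$ if $(X\times Y)\cap\mathscr{R}\ne\emptyset$. $P_{\mathscr{P}}$ is the partition of $Q$ into blocks of $\mathscr{P}$, and $\mathscr{P}_P=\bigcup_{E\in P}E\times E$ for a partition $P$. $\mathrm{RelCount}_{(\mathscr{P},\mathscr{R})}(E,B)=|\{E'\in P_{\mathscr{P}}\mid E.\mathrm{rep}\rightarrow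 E'\wedge B\,\mathscr{R}\,E'\}|$. $\mathrm{Split}(P,M)$ is the partition obtained from $P$ by replacing each block $E$ with $E\cap M\neq\emptyset$ and $E\not\subseteq M$ by the two blocks $E\cap M$ and $E\setminus M$. An equivalence relation $\mathscr{P}''\subseteq\mathscr{R}$ is $\mathscr{R}$-block-stable if for all $b,d,d'$ with $d\,\mathscr{P}''\,d'$: $d\in\rightarrow^{-1}(\mathscr{R}(b))\iff d'\in\rightarrow^{-1}(\mathscr{R}(b))$. *)

theory Defs
  imports Main
begin

definition preorder_on :: "'a set \<Rightarrow> ('a \<times> 'a) set \<Rightarrow> bool" where
  "preorder_on Q R \<longleftrightarrow> refl_on Q R \<and> trans R"

definition rblock :: "('a \<times> 'a) set \<Rightarrow> 'a \<Rightarrow> 'a set" where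
  "rblock R q = {q'. (q, q') \<in> R \<and> (q', q) \<in> R}"

definition preimg :: "('a \<times> 'a) set \<Rightarrow> 'a set \<Rightarrow> 'a set" where
  "preimg T Y = {q. \<exists>y\<in>Y. (q, y) \<in> T}"

definition set_trans :: "('a \<times> 'a) set \<Rightarrow> 'a set \<Rightarrow> 'a set \<Rightarrow> bool" where
  "set_trans T X Y \<longleftrightarrow> (\<exists>x\<in>X. \<exists>y\<in>Y. (x, y) \<in> T)"

definition set_rel :: "('a \<times> 'a) set \<Rightarrow> 'a set \<Rightarrow> 'a set \<Rightarrow> bool" where
  "set_rel R X Y \<longleftrightarrow> (X \<times> Y) \<inter> R \<noteq> {}"

definition RelCount ::
  "'a set \<Rightarrow> ('a \<times> 'a) set \<Rightarrow> ('a set \<Rightarrow> 'a) \<Rightarrow> ('a \<times> 'a) set \<Rightarrow> ('a \<times> 'a) set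
     \<Rightarrow> 'a set \<Rightarrow> 'a set \<Rightarrow> nat" where
  "RelCount Q T rep P R E B =
     card {E' \<in> Q // P. set_trans T {rep E} E' \<and> set_rel R B E'}"

definition Split :: "'a set set \<Rightarrow> 'a set \<Rightarrow> 'a set set" where
  "Split PP M =
     {E \<in> PP. \<not> (E \<inter> M \<noteq> {} \<and> \<not> E \<subseteq> M)} \<union>
     (\<Union>E \<in> {E \<in> PP. E \<inter> M \<noteq> {} \<and> \<not> E \<subseteq> M}. {E \<inter> M, E - M})"

definition rel_of_partition :: "'a set set \<Rightarrow> ('a \<times> 'a) set" where
  "rel_of_partition PP = (\<Union>E \<in> PP. E \<times> E)"

definition block_stable :: "('a \<times> 'a) set \<Rightarrow> ('a \<times> 'a) set \<Rightarrow> ('a \<times> 'a) set \<Rightarrow> bool" where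
  "block_stable T R P'' \<longleftrightarrow>
     (\<forall>b d d'. (d, d') \<in> P'' \<longrightarrow>
        (d \<in> preimg T (R `` {b}) \<longleftrightarrow> d' \<in> preimg T (R `` {b})))"

end

theory Submission
  imports Defs
begin

lemma split_rel_char:
  assumes eq: "equiv Q P"
  shows "(x, y) \<in> rel_of_partition (Split (Q // P) M) \<longleftrightarrow> (x, y) \<in> P \<and> (x \<in> M \<longleftrightarrow> y \<in> M)"
proof
  assume "(x, y) \<in> rel_of_partition (Split (Q // P) M)"
  then obtain X where X: "X \<in> Split (Q // P) M" "x \<in> X" "y \<in> X"
    unfolding rel_of_partition_def by auto
  then obtain C where C: "C \<in> Q // P" "X \<subseteq> C"
    "X = C \<or> X = C \<inter> M \<or> X = C - M" "X = C \<longrightarrow> (C \<inter> M = {} \<or> C \<subseteq> M)"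
    unfolding Split_def by blast
  have "(x, y) \<in> P" using C X eq by (meson in_mono quotient_eq_iff)
  moreover have "x \<in> M \<longleftrightarrow> y \<in> M" using C X by blast
  ultimately show "(x, y) \<in> P \<and> (x \<in> M \<longleftrightarrow> y \<in> M)" by blast
next
  assume a: "(x, y) \<in> P \<and> (x \<in> M \<longleftrightarrow> y \<in> M)"
  define C where "C = P `` {x}"
  have xQ: "x \<in> Q" using a eq unfolding equiv_def refl_on_def by blast
  have CQ: "C \<in> Q // P" unfolding C_def using xQ by (rule quotientI)
  have xC: "x \<in> C" unfolding C_def using eq xQ by (meson equiv_class_self)
  have yC: "y \<in> C" unfolding C_def using a by blast
  show "(x, y) \<in> rel_of_partition (Split (Q // P) M)"
  proof (cases "C \<inter> M \<noteq> {} \<and> \<not> C \<subseteq> M")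
    case True
    then have "C \<inter> M \<in> Split (Q // P) M" "C - M \<in> Split (Q // P) M"
      using CQ unfolding Split_def by blast+
    then show ?thesis using xC yC a unfolding rel_of_partition_def by blast
  next
    case False
    then have "C \<in> Split (Q // P) M" using CQ unfolding Split_def by blast
    then show ?thesis using xC yC unfolding rel_of_partition_def by blast
  qed
qed

theorem lemma3:
  fixes Q :: "'a set" and T R P :: "('a \<times> 'a) set" and rep :: "'a set \<Rightarrow> 'a"
    and E B :: "'a set"
  assumes finQ: "finite Q"
    and T_on: "T \<subseteq> Q \<times> Q"
    and R_pre: "preorder_on Q R"
    and P_eq: "equiv Q P"
    and P_R: "P \<subseteq> R"
    and rep_in: "\<And>X. X \<in> Q // P \<Longrightarrow> rep X \<in> X"
    and E_blk: "E \<in> Q // P"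
    and B_blk: "\<exists>q\<in>Q. B = rblock R q"
    and E_to_B: "set_trans T E B"
    and cnt0: "RelCount Q T rep P R E B = 0"
  shows "rel_of_partition (Split (Q // P) (preimg T (R `` B))) \<subset> P
       \<and> (\<forall>P''. equiv Q P'' \<and> P'' \<subseteq> P \<and> block_stable T R P''
              \<longrightarrow> P'' \<subseteq> rel_of_partition (Split (Q // P) (preimg T (R `` B))))"
proof -
  define M where "M = preimg T (R `` B)"
  note ch = split_rel_char[OF P_eq, of _ _ M]
  have sub: "rel_of_partition (Split (Q // P) M) \<subseteq> P" using ch by auto
  obtain x y where xy: "x \<in> E" "y \<in> B" "(x, y) \<in> T"
    using E_to_B unfolding set_trans_def by blast
  have "y \<in> Q" using xy T_on by blast
  then have "(y, y) \<in> R" using R_pre unfolding preorder_on_def refl_on_def by blast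
  then have xM: "x \<in> M" unfolding M_def preimg_def using xy by blast
  have rE: "rep E \<in> E" using rep_in E_blk .
  have fin: "finite (Q // P)" using finQ P_eq by (simp add: finite_quotient equiv_def)
  have empty: "{E' \<in> Q // P. set_trans T {rep E} E' \<and> set_rel R B E'} = {}"
    using cnt0 fin unfolding RelCount_def by simp
  have rM: "rep E \<notin> M"
  proof
    assume "rep E \<in> M"
    then obtain z b where zb: "(rep E, z) \<in> T" "b \<in> B" "(b, z) \<in> R"
      unfolding M_def preimg_def by blast
    have zQ: "z \<in> Q" using zb T_on by blast
    have c: "P `` {z} \<in> Q // P" using zQ by (rule quotientI)
    have zz: "z \<in> P `` {z}" using P_eq zQ by (meson equiv_class_self)
    have "set_trans T {rep E} (P `` {z})" unfolding set_trans_def using zb zz by blast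
    moreover have "set_rel R B (P `` {z})" unfolding set_rel_def using zb zz by blast
    ultimately show False using empty c by blast
  qed
  have "(x, rep E) \<in> P" using xy(1) rE E_blk P_eq by (meson quotient_eq_iff)
  moreover have "(x, rep E) \<notin> rel_of_partition (Split (Q // P) M)" using ch xM rM by blast
  ultimately have strict: "rel_of_partition (Split (Q // P) M) \<subset> P" using sub by blast
  have stab: "\<forall>P''. equiv Q P'' \<and> P'' \<subseteq> P \<and> block_stable T R P''
              \<longrightarrow> P'' \<subseteq> rel_of_partition (Split (Q // P) M)"
  proof (intro allI impI subrelI)
    fix P'' d d'
    assume h: "equiv Q P'' \<and> P'' \<subseteq> P \<and> block_stable T R P''" and dd: "(d, d') \<in> P''"
    have bs: "\<And>b. d \<in> preimg T (R `` {b}) \<longleftrightarrow> d' \<in> preimg T (R `` {b})"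
      using h dd unfolding block_stable_def by blast
    have "d \<in> M \<longleftrightarrow> d' \<in> M"
    proof -
      have "\<And>q. q \<in> M \<longleftrightarrow> (\<exists>b\<in>B. q \<in> preimg T (R `` {b}))"
        unfolding M_def preimg_def by blast
      then show ?thesis using bs by blast
    qed
    moreover have "(d, d') \<in> P" using h dd by blast
    ultimately show "(d, d') \<in> rel_of_partition (Split (Q // P) M)" using ch by blast
  qed
  show ?thesis using strict stab unfolding M_def by blast
qed

end
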